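(* Let $\langle \mathsf{E}, \mathsf{po}, \mathsf{mo}\rangle$ be a partial 1-Writer execution graph in which $\mathsf{mo}$ agrees with $\mathsf{po}$, and let $\mathsf{rf}_1,\mathsf{rf}_2$ be two reads-from relations over it. (1) If $\mathsf{rf}_1 \sqsubseteq \mathsf{rf}_2$ and $\mathsf{po}\cup\mathsf{rf}_1$ has a cycle, then $\mathsf{po}\cup\mathsf{rf}_2$ has a cycle. (2) If both $\mathsf{rf}_1$ and $\mathsf{rf}_2$ satisfy relaxed-read-coherence, then $\min(\mathsf{rf}_1,\mathsf{rf}_2)$ also satisfies relaxed-read-coherence.
   Context: Events are reads $\mathtt{r}(x,v)$ or writes $\mathtt{w}(x,v)$ on a variable $x$ with value $v$, each belonging to a thread; $\mathsf{po}$ (program order) is a strict partial order totally ordering the events of each thread and relating no events of different threads. 1-Writer: for every variable $x$ all writes to $x$ lie in a single thread. $\mathsf{mo}=\bigcup_x\mathsf{mo}_x$ with $\mathsf{mo}_x$ a strict total order on writes to $x$; "agrees with $\mathsf{po}$" means $w\,\mathsf{mo}\,w'$ implies $w\,\mathsf{po}\,w'$. A reads-from relation $\mathsf{rf}$ maps every read $r$ to a unique write $\mathsf{rf}^{-1}(r)$ with the same variable and value. $\mathsf{rf}_1\sqsubseteq\mathsf{rf}_2$ iff for every read $r$, $\mathsf{rf}_1^{-1}(r)\,\mathsf{po}^*\,\mathsf{rf}_2^{-1}(r)$. $\min(\mathsf{rf}_1,\mathsf{rf}_2)$ maps every read $r$ to the $\mathsf{po}$-smaller of $\mathsf{rf}_1^{-1}(r),\mathsf{rf}_2^{-1}(r)$.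 $\mathsf{rf}$ satisfies relaxed-read-coherence if the relation $\mathsf{rf}^{-1};\mathsf{mo}_x;\mathsf{rf}^?;\mathsf{po}$ is irreflexive for every $x$, i.e. there is no read $r$ of $x$ and writes $w,w'$ of $x$ with $w\,\mathsf{rf}\,r$, $w\,\mathsf{mo}_x\,w'$, and either $w'\,\mathsf{po}\,r$ or there is a read $r'$ with $w'\,\mathsf{rf}\,r'$ and $r'\,\mathsf{po}\,r$. *)

theory Defs
  imports Main
begin

datatype ('x,'v) act = Rd 'x 'v | Wr 'x 'v

fun avar :: "('x,'v) act \<Rightarrow> 'x" where
  "avar (Rd x v) = x" | "avar (Wr x v) = x"
fun aval :: "('x,'v) act \<Rightarrow> 'v" where
  "aval (Rd x v) = v" | "aval (Wr x v) = v"
fun is_rd :: "('x,'v) act \<Rightarrow> bool" where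
  "is_rd (Rd x v) = True" | "is_rd (Wr x v) = False"
fun is_wr :: "('x,'v) act \<Rightarrow> bool" where
  "is_wr (Rd x v) = False" | "is_wr (Wr x v) = True"

definition reads :: "('e \<Rightarrow> ('x,'v) act) \<Rightarrow> 'e set \<Rightarrow> 'e set" where
  "reads lab E = {e \<in> E. is_rd (lab e)}"
definition writes :: "('e \<Rightarrow> ('x,'v) act) \<Rightarrow> 'e set \<Rightarrow> 'e set" where
  "writes lab E = {e \<in> E. is_wr (lab e)}"

definition program_order :: "('e \<Rightarrow> 't) \<Rightarrow> 'e set \<Rightarrow> ('e \<times> 'e) set \<Rightarrow> bool" where
  "program_order tid E po \<longleftrightarrow>
     po \<subseteq> E \<times> E \<and> irrefl po \<and> trans po \<and>
     (\<forall>e\<in>E. \<forall>e'\<in>E. e \<noteq> e' \<and> tid e = tid e' \<longrightarrow> (e, e') \<in> po \<or> (e', e) \<in> po) \<and>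
     (\<forall>(e, e')\<in>po. tid e = tid e')"

definition mo_x :: "('e \<Rightarrow> ('x,'v) act) \<Rightarrow> 'e set \<Rightarrow> ('e \<times> 'e) set \<Rightarrow> 'x \<Rightarrow> ('e \<times> 'e) set" where
  "mo_x lab E mo x = {(w, w'). (w, w') \<in> mo \<and> w \<in> writes lab E \<and> w' \<in> writes lab E
                                \<and> avar (lab w) = x \<and> avar (lab w') = x}"

definition modification_order :: "('e \<Rightarrow> ('x,'v) act) \<Rightarrow> 'e set \<Rightarrow> ('e \<times> 'e) set \<Rightarrow> bool" where
  "modification_order lab E mo \<longleftrightarrow>
     mo = (\<Union>x. mo_x lab E mo x) \<and>
     (\<forall>x. let W = {w \<in> writes lab E. avar (lab w) = x} in
            irrefl (mo_x lab E mo x) \<and> trans (mo_x lab E mo x) \<and>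
            (\<forall>w\<in>W. \<forall>w'\<in>W. w \<noteq> w' \<longrightarrow> (w, w') \<in> mo_x lab E mo x \<or> (w', w) \<in> mo_x lab E mo x))"

definition one_writer :: "('e \<Rightarrow> ('x,'v) act) \<Rightarrow> ('e \<Rightarrow> 't) \<Rightarrow> 'e set \<Rightarrow> bool" where
  "one_writer lab tid E \<longleftrightarrow>
     (\<forall>w\<in>writes lab E. \<forall>w'\<in>writes lab E. avar (lab w) = avar (lab w') \<longrightarrow> tid w = tid w')"

definition execution_graph ::
  "('e \<Rightarrow> ('x,'v) act) \<Rightarrow> ('e \<Rightarrow> 't) \<Rightarrow> 'e set \<Rightarrow> ('e \<times> 'e) set \<Rightarrow> ('e \<times> 'e) set \<Rightarrow> bool" where
  "execution_graph lab tid E po mo \<longleftrightarrow> program_order tid E po \<and> modification_order lab E mo"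

definition mo_agrees_po :: "('e \<times> 'e) set \<Rightarrow> ('e \<times> 'e) set \<Rightarrow> bool" where
  "mo_agrees_po mo po \<longleftrightarrow> mo \<subseteq> po"

text \<open>A reads-from relation is given by the function rf mapping each read r to its unique
  write rf r (= rf^{-1}(r)); values of rf outside the reads are irrelevant.\<close>
definition reads_from :: "('e \<Rightarrow> ('x,'v) act) \<Rightarrow> 'e set \<Rightarrow> ('e \<Rightarrow> 'e) \<Rightarrow> bool" where
  "reads_from lab E rf \<longleftrightarrow>
     (\<forall>r\<in>reads lab E. rf r \<in> writes lab E \<and> avar (lab (rf r)) = avar (lab r)
                      \<and> aval (lab (rf r)) = aval (lab r))"

definition rf_rel :: "('e \<Rightarrow> ('x,'v) act) \<Rightarrow> 'e set \<Rightarrow> ('e \<Rightarrow> 'e) \<Rightarrow> ('e \<times> 'e) set" where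
  "rf_rel lab E rf = {(rf r, r) | r. r \<in> reads lab E}"

definition rf_le :: "('e \<Rightarrow> ('x,'v) act) \<Rightarrow> 'e set \<Rightarrow> ('e \<times> 'e) set \<Rightarrow> ('e \<Rightarrow> 'e) \<Rightarrow> ('e \<Rightarrow> 'e) \<Rightarrow> bool" where
  "rf_le lab E po rf1 rf2 \<longleftrightarrow> (\<forall>r\<in>reads lab E. (rf1 r, rf2 r) \<in> po\<^sup>*)"

definition rf_min :: "('e \<times> 'e) set \<Rightarrow> ('e \<Rightarrow> 'e) \<Rightarrow> ('e \<Rightarrow> 'e) \<Rightarrow> ('e \<Rightarrow> 'e)" where
  "rf_min po rf1 rf2 = (\<lambda>r. if (rf1 r, rf2 r) \<in> po\<^sup>* then rf1 r else rf2 r)"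

definition has_cycle :: "('e \<times> 'e) set \<Rightarrow> bool" where
  "has_cycle R \<longleftrightarrow> (\<exists>a. (a, a) \<in> R\<^sup>+)"

text \<open>Irreflexivity of rf^{-1}; mo_x; rf^?; po for every x.\<close>
definition relaxed_read_coherence ::
  "('e \<Rightarrow> ('x,'v) act) \<Rightarrow> 'e set \<Rightarrow> ('e \<times> 'e) set \<Rightarrow> ('e \<times> 'e) set \<Rightarrow> ('e \<Rightarrow> 'e) \<Rightarrow> bool" where
  "relaxed_read_coherence lab E po mo rf \<longleftrightarrow>
     (\<forall>x. \<not> (\<exists>r w w'. r \<in> reads lab E \<and> avar (lab r) = x \<and>
                       (w, r) \<in> rf_rel lab E rf \<and> (w, w') \<in> mo_x lab E mo x \<and>
                       ((w', r) \<in> po \<or> (\<exists>r'. (w', r') \<in> rf_rel lab E rf \<and> (r', r) \<in> po))))"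

end

theory Submission
  imports Defs
begin

lemma min_props:
  assumes po: "program_order tid E po" and ow: "one_writer lab tid E"
    and r1: "reads_from lab E rf1" and r2: "reads_from lab E rf2"
    and r: "r \<in> reads lab E"
  shows "(rf_min po rf1 rf2 r, rf1 r) \<in> po\<^sup>*" "(rf_min po rf1 rf2 r, rf2 r) \<in> po\<^sup>*"
    "rf_min po rf1 rf2 r = rf1 r \<or> rf_min po rf1 rf2 r = rf2 r"
proof -
  have w1: "rf1 r \<in> writes lab E" "avar (lab (rf1 r)) = avar (lab r)"
    using r1 r unfolding reads_from_def by auto
  have w2: "rf2 r \<in> writes lab E" "avar (lab (rf2 r)) = avar (lab r)"
    using r2 r unfolding reads_from_def by auto
  have t: "tid (rf1 r) = tid (rf2 r)" using ow w1 w2 unfolding one_writer_def by metis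
  have E: "rf1 r \<in> E" "rf2 r \<in> E" using w1 w2 unfolding writes_def by auto
  have c: "(rf1 r, rf2 r) \<in> po\<^sup>* \<or> (rf2 r, rf1 r) \<in> po"
    using po t E unfolding program_order_def by (metis r_into_rtrancl rtrancl.rtrancl_refl)
  show "(rf_min po rf1 rf2 r, rf1 r) \<in> po\<^sup>*" "(rf_min po rf1 rf2 r, rf2 r) \<in> po\<^sup>*"
    "rf_min po rf1 rf2 r = rf1 r \<or> rf_min po rf1 rf2 r = rf2 r"
    using c unfolding rf_min_def by auto
qed

lemma part1:
  assumes le: "rf_le lab E po rf1 rf2" and cyc: "has_cycle (po \<union> rf_rel lab E rf1)"
  shows "has_cycle (po \<union> rf_rel lab E rf2)"
proof -
  let ?S = "po \<union> rf_rel lab E rf2"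
  have sub: "po \<union> rf_rel lab E rf1 \<subseteq> ?S\<^sup>+"
  proof
    fix p assume p: "p \<in> po \<union> rf_rel lab E rf1"
    show "p \<in> ?S\<^sup>+"
    proof (cases "p \<in> po")
      case True then show ?thesis by (intro r_into_trancl' UnI1)
    next
      case False
      then have "p \<in> rf_rel lab E rf1" using p by blast
      then obtain r where rr: "p = (rf1 r, r)" "r \<in> reads lab E" unfolding rf_rel_def by blast
      have a: "(rf1 r, rf2 r) \<in> ?S\<^sup>*" using le rr(2) unfolding rf_le_def
      proof -
        have "(rf1 r, rf2 r) \<in> po\<^sup>*" using le rr(2) unfolding rf_le_def by blast
        moreover have "po\<^sup>* \<subseteq> ?S\<^sup>*" by (rule rtrancl_mono) blast
        ultimately show ?thesis by blast
      qed
      have b: "(rf2 r, r) \<in> ?S" using rr(2) unfolding rf_rel_def by blast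
      show ?thesis using rtrancl_into_trancl1[OF a b] rr(1) by simp
    qed
  qed
  from cyc obtain a where "(a, a) \<in> (po \<union> rf_rel lab E rf1)\<^sup>+" unfolding has_cycle_def by auto
  then have "(a, a) \<in> (?S\<^sup>+)\<^sup>+" using trancl_mono[OF _ sub] by blast
  then have "(a, a) \<in> ?S\<^sup>+" by simp
  then show ?thesis unfolding has_cycle_def by blast
qed

lemma rrc_viol1:
  assumes "relaxed_read_coherence lab E po mo rf" "r \<in> reads lab E"
    "(w, r) \<in> rf_rel lab E rf" "(w, w') \<in> mo_x lab E mo (avar (lab r))" "(w', r) \<in> po"
  shows False
proof -
  have "\<exists>r0 w0 w0'. r0 \<in> reads lab E \<and> avar (lab r0) = avar (lab r) \<and>
                       (w0, r0) \<in> rf_rel lab E rf \<and> (w0, w0') \<in> mo_x lab E mo (avar (lab r)) \<and>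
                       ((w0', r0) \<in> po \<or> (\<exists>r'. (w0', r') \<in> rf_rel lab E rf \<and> (r', r0) \<in> po))"
    using assms(2-) by blast
  then show False using assms(1) unfolding relaxed_read_coherence_def by blast
qed

lemma rrc_viol2:
  assumes "relaxed_read_coherence lab E po mo rf" "r \<in> reads lab E"
    "(w, r) \<in> rf_rel lab E rf" "(w, w') \<in> mo_x lab E mo (avar (lab r))"
    "(w', r') \<in> rf_rel lab E rf" "(r', r) \<in> po"
  shows False
proof -
  have "\<exists>r0 w0 w0'. r0 \<in> reads lab E \<and> avar (lab r0) = avar (lab r) \<and>
                       (w0, r0) \<in> rf_rel lab E rf \<and> (w0, w0') \<in> mo_x lab E mo (avar (lab r)) \<and>
                       ((w0', r0) \<in> po \<or> (\<exists>r'. (w0', r') \<in> rf_rel lab E rf \<and> (r', r0) \<in> po))"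
    using assms(2-) by blast
  then show False using assms(1) unfolding relaxed_read_coherence_def by blast
qed

theorem mainTheorem8:
  fixes lab :: "'e \<Rightarrow> ('x,'v) act" and tid :: "'e \<Rightarrow> 't"
    and E :: "'e set" and po mo :: "('e \<times> 'e) set" and rf1 rf2 :: "'e \<Rightarrow> 'e"
  assumes "execution_graph lab tid E po mo"
    and "one_writer lab tid E"
    and "mo_agrees_po mo po"
    and "reads_from lab E rf1" and "reads_from lab E rf2"
  shows "(rf_le lab E po rf1 rf2 \<and> has_cycle (po \<union> rf_rel lab E rf1)
            \<longrightarrow> has_cycle (po \<union> rf_rel lab E rf2))
       \<and> (relaxed_read_coherence lab E po mo rf1 \<and> relaxed_read_coherence lab E po mo rf2
            \<longrightarrow> relaxed_read_coherence lab E po mo (rf_min po rf1 rf2))"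
proof (intro conjI impI)
  show "has_cycle (po \<union> rf_rel lab E rf2)"
    if "rf_le lab E po rf1 rf2 \<and> has_cycle (po \<union> rf_rel lab E rf1)"
    using that part1 by blast
next
  assume c: "relaxed_read_coherence lab E po mo rf1 \<and> relaxed_read_coherence lab E po mo rf2"
  have po: "program_order tid E po" and mo: "modification_order lab E mo"
    using assms(1) unfolding execution_graph_def by auto
  have irr: "irrefl po" and tr: "trans po" using po unfolding program_order_def by auto
  have mopo: "mo \<subseteq> po" using assms(3) unfolding mo_agrees_po_def .
  let ?m = "rf_min po rf1 rf2"
  note mp = min_props[OF po assms(2) assms(4) assms(5)]
  show "relaxed_read_coherence lab E po mo ?m"
    unfolding relaxed_read_coherence_def
  proof (intro allI notI)
    fix x
    assume "\<exists>r w w'. r \<in> reads lab E \<and> avar (lab r) = x \<and>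
                       (w, r) \<in> rf_rel lab E ?m \<and> (w, w') \<in> mo_x lab E mo x \<and>
                       ((w', r) \<in> po \<or> (\<exists>r'. (w', r') \<in> rf_rel lab E ?m \<and> (r', r) \<in> po))"
    then obtain r w w' where r: "r \<in> reads lab E" "avar (lab r) = x"
      and wr: "(w, r) \<in> rf_rel lab E ?m" and ww: "(w, w') \<in> mo_x lab E mo x"
      and alt: "(w', r) \<in> po \<or> (\<exists>r'. (w', r') \<in> rf_rel lab E ?m \<and> (r', r) \<in> po)" by blast
    have w: "w = ?m r" using wr unfolding rf_rel_def by auto
    obtain i where i: "i = rf1 \<or> i = rf2" "w = i r"
      using mp(3)[OF r(1)] w by blast
    have ci: "relaxed_read_coherence lab E po mo i" using c i(1) by auto
    have ri: "reads_from lab E i" using assms(4,5) i(1) by auto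
    have wri: "(w, r) \<in> rf_rel lab E i" using i(2) r(1) unfolding rf_rel_def by auto
    show False
    proof (cases "(w', r) \<in> po")
      case True
      then show False using rrc_viol1[OF ci r(1) wri] ww r(2) by blast
    next
      case False
      then obtain r' where r': "(w', r') \<in> rf_rel lab E ?m" "(r', r) \<in> po" using alt by blast
      have r'r: "r' \<in> reads lab E" "w' = ?m r'" using r'(1) unfolding rf_rel_def by auto
      have wpw': "(w, w') \<in> po" using ww mopo unfolding mo_x_def by auto
      have w'pi: "(w', i r') \<in> po\<^sup>*" using mp(1,2)[OF r'r(1)] i(1) r'r(2) by auto
      have wpi: "(w, i r') \<in> po" using wpw' w'pi tr
        by (metis rtrancl_eq_or_trancl trancl_id transD)
      have wW: "w \<in> writes lab E" "avar (lab w) = x" using ww unfolding mo_x_def by auto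
      have w'x: "w' \<in> writes lab E" "avar (lab w') = x" using ww unfolding mo_x_def by auto
      have "avar (lab r') = x"
        using r'r assms(4,5) w'x mp(3)[OF r'r(1)] unfolding reads_from_def by metis
      then have iW: "i r' \<in> writes lab E" "avar (lab (i r')) = x"
        using ri r'r(1) unfolding reads_from_def by auto
      have ne: "w \<noteq> i r'" using wpi irr unfolding irrefl_def by auto
      have tot: "(w, i r') \<in> mo_x lab E mo x \<or> (i r', w) \<in> mo_x lab E mo x"
        using mo wW iW ne unfolding modification_order_def Let_def by auto
      have "(w, i r') \<in> mo_x lab E mo x"
      proof (rule ccontr)
        assume "(w, i r') \<notin> mo_x lab E mo x"
        then have "(i r', w) \<in> po" using tot mopo unfolding mo_x_def by auto
        then show False using wpi irr tr unfolding irrefl_def trans_def by blast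
      qed
      moreover have "(i r', r') \<in> rf_rel lab E i" using r'r(1) unfolding rf_rel_def by auto
      ultimately show False using rrc_viol2[OF ci r(1) wri] r'(2) r(2) by blast
    qed
  qed
qed

end
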